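(* Let $n\ge 2$, let $\sigma=(1,2,\dots,n-1)\in S_n$, and let $\rho\in S_n$ be defined by $\rho(n-1)=n$, $\rho(n)=n-1$, $\rho(k)=n-1-k$ for $1\le k\le n-2$. Let $\tau\in S_n$ be a permutation of order $2$ with $\tau(n)=n-1$ and $\tau\sigma^k\tau=\sigma^{\tau(k)}\tau\sigma^{\tau\rho\tau(k)}$ for all $k\in\{1,\dots,n-2\}$ (such a $\tau$ exists exactly when $IK_n$ is a $G$-graph, and then $IK_n\cong\Phi(\langle\sigma,\tau\rangle,\{\sigma,\tau\})$). Then all the orbits of the action of the group $\langle\rho,\tau\rangle$ on $\{1,\dots,n\}$ have six elements, except for either one or two orbits with two elements and, if $n$ is odd, one orbit with either one or three elements.
   Context: $S_n$ is the symmetric group on $\{1,\dots,n\}$ with product given by composition of functions (rightmost applied first). $K_n$ is the complete simple graph on $n$ vertices and $IK_n$ its incidence graph. For a group $G$ and a multiset $S$ of elements of $G$, $\Phi(G,S)$ is the multigraph whose vertex set is the union over the members $s$ of $S$ of the right cosets $\langle s\rangle x$, $x\in G$, with one edge labeled $g$ between $\langle s\rangle x$ and $\langle t\rangle y$ ($s,t$ distinct members of $S$) for each $g\in\langle s\rangle x\cap\langle t\rangle y$; a $G$-graph is a multigraph isomorphic to some $\Phi(G,S)$. *)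

theory Defs
  imports "HOL-Combinatorics.Permutations"
begin

text \<open>Permutations of {1..n} are functions nat => nat that permute {1..n};
  composition f o g applies g first (rightmost first), and powers are funpow.\<close>

definition sigma_perm :: "nat \<Rightarrow> nat \<Rightarrow> nat" where
  "sigma_perm n k = (if 1 \<le> k \<and> k \<le> n - 2 then k + 1 else if k = n - 1 then 1 else k)"

definition rho_perm :: "nat \<Rightarrow> nat \<Rightarrow> nat" where
  "rho_perm n k = (if k = n - 1 then n else if k = n then n - 1
                   else if 1 \<le> k \<and> k \<le> n - 2 then n - 1 - k else k)"

inductive_set gen_perm_group :: "('a \<Rightarrow> 'a) set \<Rightarrow> ('a \<Rightarrow> 'a) set" for S where
  gen_id: "id \<in> gen_perm_group S"
| gen_mult: "g \<in> gen_perm_group S \<Longrightarrow> s \<in> S \<Longrightarrow> s \<circ> g \<in> gen_perm_group S"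
| gen_inv: "g \<in> gen_perm_group S \<Longrightarrow> s \<in> S \<Longrightarrow> inv s \<circ> g \<in> gen_perm_group S"

definition perm_orbit :: "('a \<Rightarrow> 'a) set \<Rightarrow> 'a \<Rightarrow> 'a set" where
  "perm_orbit S x = {g x | g. g \<in> gen_perm_group S}"

definition perm_orbits :: "('a \<Rightarrow> 'a) set \<Rightarrow> 'a set \<Rightarrow> 'a set set" where
  "perm_orbits S X = perm_orbit S ` X"

end

theory Submission
  imports Defs
begin

definition orb6 :: "('a \<Rightarrow> 'a) \<Rightarrow> ('a \<Rightarrow> 'a) \<Rightarrow> 'a \<Rightarrow> 'a set" where
  "orb6 r t x = {x, r x, t x, r (t x), t (r x), r (t (r x))}"

lemma orb6_props:
  assumes R: "\<And>y. r (r y) = y" and T: "\<And>y. t (t y) = y"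
    and U: "\<And>y. r (t (r (t (r (t y))))) = y"
  shows "card (orb6 r t x) \<in> {1,2,3,6}"
    and "card (orb6 r t x) = 2 \<Longrightarrow> t x = r x \<and> r x \<noteq> x \<and> orb6 r t x = {x, r x}"
    and "card (orb6 r t x) \<in> {1,3} \<Longrightarrow> \<exists>y \<in> orb6 r t x. r y = y"
    and "r x = x \<Longrightarrow> card (orb6 r t x) \<in> {1,3}"
proof -
  have TR: "t (r y) = r (t (r (t y)))" for y
    using U[of "t (r y)"] by (simp add: R T)
  have TRT: "t (r (t y)) = r (t (r y))" for y
    using TR[of "t y"] by (simp add: T)
  have "card (orb6 r t x) \<in> {1,2,3,6} \<and>
    (card (orb6 r t x) = 2 \<longrightarrow> t x = r x \<and> r x \<noteq> x \<and> orb6 r t x = {x, r x}) \<and>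
    (card (orb6 r t x) \<in> {1,3} \<longrightarrow> (\<exists>y \<in> orb6 r t x. r y = y)) \<and>
    (r x = x \<longrightarrow> card (orb6 r t x) \<in> {1,3})"
  proof (cases "r (t x) = x")
    case True
    then have tx: "t x = r x" by (metis R)
    have trx: "t (r x) = x" using tx T by metis
    have O: "orb6 r t x = {x, r x}" unfolding orb6_def using tx trx R by auto
    show ?thesis
    proof (cases "r x = x")
      case True then show ?thesis using O by auto
    next
      case False then show ?thesis using O tx by auto
    qed
  next
    case False
    have d1: "t (r x) \<noteq> x" using False by (metis R T)
    have d2: "r (t x) \<noteq> t (r x)" using False TR by (metis R T U)
    show ?thesis
    proof (cases "r x = x \<or> r x = r (t x) \<or> r x = t (r x)")
      case True
      have Ofx: "orb6 r t x = {x, r (t x), t (r x)} \<and> (\<exists>y \<in> orb6 r t x. r y = y)"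
      proof -
        consider "r x = x" | "r x = r (t x)" | "r x = t (r x)" using True by blast
        then show ?thesis
        proof cases
          case 1 then show ?thesis unfolding orb6_def by auto
        next
          case 2
          then have tx: "t x = x" by (metis R)
          have a: "r (t (r x)) = t (r x)" using TRT[of x] tx by simp
          then show ?thesis unfolding orb6_def using tx by auto
        next
          case 3
          have "t (r x) = r (t (r (t x)))" by (rule TR)
          then have "r x = r (t (r (t x)))" using 3 by simp
          then have "x = t (r (t x))" by (metis R)
          then have c: "r (t x) = t x" by (metis T)
          have a: "t (r x) = r x" using 3 by simp
          have b: "r (t (r x)) = x" using a R by simp
          show ?thesis unfolding orb6_def using a b c by auto
        qed
      qed
      then have O: "orb6 r t x = {x, r (t x), t (r x)}" and fx: "\<exists>y \<in> orb6 r t x. r y = y" by auto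
      have c3: "card (orb6 r t x) = 3" using O False d1 d2 by auto
      show ?thesis using c3 fx by auto
    next
      case F2: False
      have e1: "r x \<noteq> x" "r x \<noteq> r (t x)" "r x \<noteq> t (r x)" using F2 by auto
      have e2a: "t x \<noteq> x" using e1 by auto
      have e2b: "t x \<noteq> r (t x)"
      proof
        assume h: "t x = r (t x)"
        have "r (t (r (t x))) = r x" using h by (metis R T)
        then show False using TR[of x] e1 by simp
      qed
      have e2c: "t x \<noteq> t (r x)" using e1 by (metis T)
      have e2d: "t x \<noteq> r x" using False by (metis R)
      have e3a: "r (t (r x)) \<noteq> x" using e1 by (metis R)
      have e3b: "r (t (r x)) \<noteq> r (t x)" using e1 by (metis R T)
      have e3c: "r (t (r x)) \<noteq> t (r x)"
      proof
        assume h: "r (t (r x)) = t (r x)"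
        have "t (r (t (r x))) = r (t x)" using TRT[of "r x"] by (simp add: R)
        then have "r x = r (t x)" using h by (simp add: T)
        then show False using e1 by simp
      qed
      have e3d: "r (t (r x)) \<noteq> r x" using d1 by (metis R)
      have e3e: "r (t (r x)) \<noteq> t x"
      proof
        assume h: "r (t (r x)) = t x"
        have "t (r (t x)) = t x" using TRT[of x] h by simp
        then have "r (t x) = x" by (metis T)
        then show False using False by simp
      qed
      note e2 = e2a e2b e2c e2d
      note e3 = e3a e3b e3c e3d e3e
      have "card (orb6 r t x) = 6"
        unfolding orb6_def using False d1 d2 e1 e2 e3 by simp
      then show ?thesis using F2 by auto
    qed
  qed
  then show "card (orb6 r t x) \<in> {1,2,3,6}"
    and "card (orb6 r t x) = 2 \<Longrightarrow> t x = r x \<and> r x \<noteq> x \<and> orb6 r t x = {x, r x}"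
    and "card (orb6 r t x) \<in> {1,3} \<Longrightarrow> \<exists>y \<in> orb6 r t x. r y = y"
    and "r x = x \<Longrightarrow> card (orb6 r t x) \<in> {1,3}" by auto
qed


lemma orb6_basic:
  assumes R: "\<And>y. r (r y) = y" and T: "\<And>y. t (t y) = y"
    and U: "\<And>y. r (t (r (t (r (t y))))) = y"
  shows "y \<in> orb6 r t x \<Longrightarrow> r y \<in> orb6 r t x \<and> t y \<in> orb6 r t x"
    and "y \<in> orb6 r t x \<Longrightarrow> orb6 r t y = orb6 r t x"
    and "perm_orbit {r,t} x = orb6 r t x"
proof -
  have TR: "t (r y) = r (t (r (t y)))" for y
    using U[of "t (r y)"] by (simp add: R T)
  have TRT: "t (r (t y)) = r (t (r y))" for y
    using TR[of "t y"] by (simp add: T)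
  show cl: "r y \<in> orb6 r t x \<and> t y \<in> orb6 r t x" if "y \<in> orb6 r t x" for y x
    using that unfolding orb6_def by (auto simp: R T TRT)
  have sub: "orb6 r t y \<subseteq> orb6 r t x" if "y \<in> orb6 r t x" for y x
  proof -
    have "r (t y) \<in> orb6 r t x" "t (r y) \<in> orb6 r t x" "r (t (r y)) \<in> orb6 r t x"
      using cl that by blast+
    then show ?thesis using that cl unfolding orb6_def[of r t y] by blast
  qed
  have sym: "x \<in> orb6 r t y" if "y \<in> orb6 r t x" for y x
    using that unfolding orb6_def by (auto simp: R T TRT)
  show "orb6 r t y = orb6 r t x" if "y \<in> orb6 r t x"
    using sub[OF that] sub[OF sym[OF that]] by blast
  have ir: "inv r = r" by (rule inv_equality) (simp_all add: R)
  have it: "inv t = t" by (rule inv_equality) (simp_all add: T)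
  have A: "\<forall>x. g x \<in> orb6 r t x" if "g \<in> gen_perm_group {r,t}" for g
    using that
  proof induction
    case gen_id then show ?case by (simp add: orb6_def)
  next
    case (gen_mult g s) then show ?case using cl by auto
  next
    case (gen_inv g s) then show ?case using cl ir it by auto
  qed
  have gr: "r \<circ> g \<in> gen_perm_group {r,t}" if "g \<in> gen_perm_group {r,t}" for g
    using gen_mult[OF that, of r] by simp
  have gt: "t \<circ> g \<in> gen_perm_group {r,t}" if "g \<in> gen_perm_group {r,t}" for g
    using gen_mult[OF that, of t] by simp
  have i0: "id \<in> gen_perm_group {r,t}" by (rule gen_id)
  have "r \<circ> id \<in> gen_perm_group {r,t}" "t \<circ> id \<in> gen_perm_group {r,t}"
    "r \<circ> (t \<circ> id) \<in> gen_perm_group {r,t}" "t \<circ> (r \<circ> id) \<in> gen_perm_group {r,t}"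
    "r \<circ> (t \<circ> (r \<circ> id)) \<in> gen_perm_group {r,t}"
    using gr gt i0 by blast+
  then have B: "orb6 r t x \<subseteq> perm_orbit {r,t} x"
  proof -
    assume gs: "r \<circ> id \<in> gen_perm_group {r,t}" "t \<circ> id \<in> gen_perm_group {r,t}"
      "r \<circ> (t \<circ> id) \<in> gen_perm_group {r,t}" "t \<circ> (r \<circ> id) \<in> gen_perm_group {r,t}"
      "r \<circ> (t \<circ> (r \<circ> id)) \<in> gen_perm_group {r,t}"
    have m: "g x \<in> perm_orbit {r,t} x" if "g \<in> gen_perm_group {r,t}" for g
      using that unfolding perm_orbit_def by blast
    show ?thesis using m[OF i0] m[OF gs(1)] m[OF gs(2)] m[OF gs(3)] m[OF gs(4)] m[OF gs(5)]
      unfolding orb6_def by simp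
  qed
  show "perm_orbit {r,t} x = orb6 r t x"
    using A B unfolding perm_orbit_def by blast
qed

lemma sig_pow:
  assumes "2 \<le> n" "1 \<le> x" "x \<le> n - 1"
  shows "(sigma_perm n ^^ j) x = (x - 1 + j) mod (n - 1) + 1"
proof (induction j)
  case 0 then show ?case using assms by simp
next
  case (Suc j)
  define q where "q = (x - 1 + j) mod (n - 1)"
  have q: "q < n - 1" using assms unfolding q_def by simp
  have "(sigma_perm n ^^ Suc j) x = sigma_perm n (q + 1)" using Suc by (simp add: q_def)
  also have "\<dots> = (x - 1 + Suc j) mod (n - 1) + 1"
  proof -
    have "x - 1 + Suc j = Suc (x - 1 + j)" by simp
    then have e: "(x - 1 + Suc j) mod (n - 1) = (if Suc q = n - 1 then 0 else Suc q)"
      unfolding q_def by (simp only: mod_Suc)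
    show ?thesis unfolding e sigma_perm_def using q assms by auto
  qed
  finally show ?case .
qed

lemma sig_pow_n: "1 \<le> n \<Longrightarrow> (sigma_perm n ^^ j) n = n"
  by (induction j) (auto simp: sigma_perm_def)

lemma rho_rho: assumes "2 \<le> n" shows "rho_perm n (rho_perm n y) = y"
proof -
  consider "y = n - 1" | "y = n" | "1 \<le> y \<and> y \<le> n - 2" | "y = 0 \<or> y > n" using assms by linarith
  then show ?thesis
  proof cases
    case 1 then show ?thesis using assms unfolding rho_perm_def by simp
  next
    case 2 then show ?thesis using assms unfolding rho_perm_def by simp
  next
    case 3
    then have e: "rho_perm n y = n - 1 - y" unfolding rho_perm_def by auto
    have "1 \<le> n - 1 - y" "n - 1 - y \<le> n - 2" "n - 1 - y \<noteq> n - 1" "n - 1 - y \<noteq> n" using 3 by auto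
    then show ?thesis unfolding e unfolding rho_perm_def using 3 by auto
  next
    case 4 then show ?thesis using assms unfolding rho_perm_def by auto
  qed
qed

lemma rho_mid: "1 \<le> k \<Longrightarrow> k \<le> n - 2 \<Longrightarrow> rho_perm n k = n - 1 - k"
  unfolding rho_perm_def by auto

lemma mod_lt2: assumes h: "N < 2 * m" shows "(N::nat) mod m = (if N < m then N else N - m)"
proof (cases "N < m")
  case True then show ?thesis by simp
next
  case False
  then have "N mod m = (N - m) mod m" by (simp add: le_mod_geq)
  also have "\<dots> = N - m" using h False by (intro mod_less) auto
  finally show ?thesis using False by simp
qed

lemma mod_cancel_aux:
  assumes "(T + (m - c)) mod m = (T + (m - d)) mod (m::nat)" "T < m"
    "1 \<le> c" "c < m" "1 \<le> d" "d < m"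
  shows "c = d"
proof -
  have "T + (m - c) < 2 * m" "T + (m - d) < 2 * m" using assms by auto
  then show ?thesis using assms(1) assms(2-) unfolding mod_lt2[OF \<open>T + (m - c) < 2 * m\<close>] mod_lt2[OF \<open>T + (m - d) < 2 * m\<close>]
    by (auto split: if_splits)
qed

locale P9 =
  fixes n :: nat and \<tau> :: "nat \<Rightarrow> nat"
  assumes n2: "n \<ge> 2"
    and perm: "\<tau> permutes {1..n}"
    and inv2: "\<tau> \<circ> \<tau> = id"
    and tn: "\<tau> n = n - 1"
    and rel0: "\<forall>k \<in> {1..n-2}. \<tau> \<circ> (sigma_perm n ^^ k) \<circ> \<tau>
            = (sigma_perm n ^^ (\<tau> k)) \<circ> \<tau> \<circ> (sigma_perm n ^^ ((\<tau> \<circ> rho_perm n \<circ> \<tau>) k))"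
begin

abbreviation "\<sigma> \<equiv> sigma_perm n"
abbreviation "\<rho> \<equiv> rho_perm n"

lemma tt: "\<tau> (\<tau> y) = y" using fun_cong[OF inv2, of y] by simp

lemma tnm1: "\<tau> (n - 1) = n" using tt[of n] tn by simp

lemma t_out: "y \<notin> {1..n} \<Longrightarrow> \<tau> y = y" using perm by (simp add: permutes_not_in)

lemma t_in: "y \<in> {1..n} \<Longrightarrow> \<tau> y \<in> {1..n}" using permutes_in_image[OF perm] by blast

lemma t_mid: assumes "1 \<le> y" "y \<le> n - 2" shows "1 \<le> \<tau> y" "\<tau> y \<le> n - 2"
proof -
  have "\<tau> y \<in> {1..n}" using t_in assms n2 by auto
  moreover have "\<tau> y \<noteq> n - 1"
  proof
    assume "\<tau> y = n - 1"
    then have "y = n" using tt[of y] tnm1 by simp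
    then show False using assms n2 by simp
  qed
  moreover have "\<tau> y \<noteq> n" using tt[of y] tn assms n2 by auto
  ultimately show "1 \<le> \<tau> y" "\<tau> y \<le> n - 2" by auto
qed

lemma rho_mid_range: "1 \<le> k \<Longrightarrow> k \<le> n - 2 \<Longrightarrow> 1 \<le> \<rho> k \<and> \<rho> k \<le> n - 2"
  using rho_mid[of k n] n2 by auto

lemma rel: "1 \<le> k \<Longrightarrow> k \<le> n - 2 \<Longrightarrow>
   \<tau> ((\<sigma> ^^ k) (\<tau> x)) = (\<sigma> ^^ (\<tau> k)) (\<tau> ((\<sigma> ^^ (\<tau> (\<rho> (\<tau> k)))) x))"
  using fun_cong[OF rel0[rule_format, of k], of x] by simp


lemma rho_nm1: "\<rho> (n - 1) = n" unfolding rho_perm_def by simp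
lemma rho_n: "\<rho> n = n - 1" using n2 unfolding rho_perm_def by simp
lemma rho_out: "y = 0 \<or> y > n \<Longrightarrow> \<rho> y = y" using n2 unfolding rho_perm_def by auto
lemma rho_nm1': "\<rho> (n - Suc 0) = n" using rho_nm1 by simp
lemma rho_n': "\<rho> n = n - Suc 0" using rho_n by simp
lemma tnm1': "\<tau> (n - Suc 0) = n" using tnm1 by simp
lemma tn': "\<tau> n = n - Suc 0" using tn by simp
lemma rr: "\<rho> (\<rho> y) = y" using rho_rho[OF n2] .
lemma rho_in: "y \<in> {1..n} \<Longrightarrow> \<rho> y \<in> {1..n}"
proof -
  assume y: "y \<in> {1..n}"
  consider "y = n - 1" | "y = n" | "1 \<le> y \<and> y \<le> n - 2" using y n2 by fastforce
  then show ?thesis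
  proof cases
    case 1 then show ?thesis using rho_nm1 n2 by simp
  next
    case 2 then show ?thesis using rho_n n2 by simp
  next
    case 3
    then have "1 \<le> \<rho> y \<and> \<rho> y \<le> n - 2" using rho_mid_range by blast
    then show ?thesis by (simp; linarith)
  qed
qed

lemma F2:
  assumes k: "1 \<le> k" "k \<le> n - 2"
  shows "\<tau> (\<rho> k) = \<rho> (\<tau> (\<rho> (\<tau> k)))"
proof -
  define x0 where "x0 = \<tau> (\<rho> k)"
  define b where "b = \<tau> (\<rho> (\<tau> k))"
  have rk: "1 \<le> \<rho> k" "\<rho> k \<le> n - 2" using rho_mid_range[OF k] by auto
  have x0r: "1 \<le> x0" "x0 \<le> n - 2" unfolding x0_def using t_mid[OF rk] by auto
  have ak: "1 \<le> \<tau> k" "\<tau> k \<le> n - 2" using t_mid[OF k] by auto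
  have rak: "1 \<le> \<rho> (\<tau> k)" "\<rho> (\<tau> k) \<le> n - 2" using rho_mid_range[OF ak] by auto
  have br: "1 \<le> b" "b \<le> n - 2" unfolding b_def using t_mid[OF rak] by auto
  have tx0: "\<tau> x0 = n - 1 - k" unfolding x0_def using tt rho_mid[OF k] by simp
  have "(\<sigma> ^^ k) (n - 1 - k) = (n - 1 - k - 1 + k) mod (n - 1) + 1"
    using sig_pow[OF n2, of "n - 1 - k" k] k by simp
  also have "\<dots> = n - 1" using k by simp
  finally have L: "\<tau> ((\<sigma> ^^ k) (\<tau> x0)) = n" using tx0 tnm1 by simp
  have R: "\<tau> ((\<sigma> ^^ k) (\<tau> x0)) = (\<sigma> ^^ (\<tau> k)) (\<tau> ((\<sigma> ^^ b) x0))"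
    using rel[OF k] unfolding b_def .
  define z where "z = (\<sigma> ^^ b) x0"
  have z: "z = (x0 - 1 + b) mod (n - 1) + 1" unfolding z_def using sig_pow[OF n2, of x0 b] x0r by simp
  have "(x0 - 1 + b) mod (n - 1) < n - 1" using n2 by simp
  then have zr: "1 \<le> z" "z \<le> n - 1" unfolding z by auto
  have "z = n - 1"
  proof (rule ccontr)
    assume "z \<noteq> n - 1"
    then have "1 \<le> z" "z \<le> n - 2" using zr by auto
    then have tz: "1 \<le> \<tau> z" "\<tau> z \<le> n - 2" using t_mid by auto
    have "(\<sigma> ^^ (\<tau> k)) (\<tau> z) = (\<tau> z - 1 + \<tau> k) mod (n - 1) + 1"
      using sig_pow[OF n2, of "\<tau> z" "\<tau> k"] tz by simp
    also have "\<dots> < n"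
    proof -
      have "(\<tau> z - 1 + \<tau> k) mod (n - 1) < n - 1" using n2 by simp
      then show ?thesis by simp
    qed
    finally show False using L R unfolding z_def by simp
  qed
  then have m: "(x0 - 1 + b) mod (n - 1) = n - 2" using z n2 by simp
  have lt: "x0 - 1 + b < 2 * (n - 1)" using x0r br by simp
  have "x0 - 1 + b = n - 2"
  proof (cases "x0 - 1 + b < n - 1")
    case True then show ?thesis using m by simp
  next
    case False
    then have "x0 - 1 + b - (n - 1) = n - 2" using m unfolding mod_lt2[OF lt] by simp
    then show ?thesis using x0r br False by simp
  qed
  then have "x0 = n - 1 - b" using x0r by simp
  then show ?thesis using rho_mid[OF br] unfolding x0_def b_def by simp
qed

lemma U: "\<rho> (\<tau> (\<rho> (\<tau> (\<rho> (\<tau> y))))) = y"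
proof -
  consider "1 \<le> y \<and> y \<le> n - 2" | "y = n - 1" | "y = n" | "y = 0 \<or> y > n" using n2 by linarith
  then show ?thesis
  proof cases
    case 1
    define z where "z = \<rho> (\<tau> y)"
    have "1 \<le> \<tau> y" "\<tau> y \<le> n - 2" using t_mid 1 by auto
    then have z: "1 \<le> z" "z \<le> n - 2" unfolding z_def using rho_mid_range by auto
    have h2: "\<tau> (\<rho> z) = y" unfolding z_def by (simp add: rr tt)
    have h1: "\<tau> (\<rho> z) = \<rho> (\<tau> (\<rho> (\<tau> z)))" using F2[OF z] .
    have "\<rho> (\<tau> (\<rho> (\<tau> z))) = y" using h1 h2 by metis
    then show ?thesis unfolding z_def .
  next
    case 2 show ?thesis unfolding 2 tnm1 rho_n rho_nm1 tnm1 rho_n tnm1 rho_n by (rule refl)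
  next
    case 3 show ?thesis unfolding 3 tn rho_nm1 tnm1 rho_n tnm1 rho_n rho_nm1 by (rule refl)
  next
    case 4
    then have "\<tau> y = y" using t_out by auto
    then show ?thesis using rho_out[OF 4] by simp
  qed
qed

lemma F3:
  assumes "y \<in> {1..n}" "\<rho> y = y"
  shows "odd n \<and> y = (n - 1) div 2"
proof -
  have "y \<noteq> n - 1" using assms rho_nm1 n2 by auto
  moreover have "y \<noteq> n" using assms rho_n n2 by auto
  ultimately have y: "1 \<le> y" "y \<le> n - 2" using assms by auto
  then have "n - 1 - y = y" using assms rho_mid by simp
  then have e: "n = 2 * y + 1" using y by linarith
  then show ?thesis by simp
qed

lemma F3c:
  assumes "odd n"
  shows "(n - 1) div 2 \<in> {1..n}" "\<rho> ((n - 1) div 2) = (n - 1) div 2"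
proof -
  obtain k where nk: "n = 2 * k + 1" using assms oddE by blast
  then have kd: "(n - 1) div 2 = k" by simp
  have k: "1 \<le> k" "k \<le> n - 2" using nk n2 by linarith+
  have "\<rho> k = n - 1 - k" using rho_mid[OF k] .
  also have "\<dots> = k" using nk by simp
  finally show "\<rho> ((n - 1) div 2) = (n - 1) div 2" unfolding kd .
  show "(n - 1) div 2 \<in> {1..n}" unfolding kd using k by simp
qed

lemma K:
  assumes c: "1 \<le> c" "c \<le> n - 2" and d: "1 \<le> d" "d \<le> n - 2"
    and tc: "\<tau> c = n - 1 - c" and td: "\<tau> d = n - 1 - d" and cd: "c + d \<noteq> n - 1"
  shows "\<tau> (if c + d < n - 1 then c + d else c + d - (n - 1)) =
     (\<tau> (if c + d < n - 1 then n - 1 - (c + d) else 2 * (n - 1) - (c + d)) - 1 + (n - 1 - c)) mod (n - 1) + 1"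
proof -
  define S where "S = (if c + d < n - 1 then c + d else c + d - (n - 1))"
  define S' where "S' = (if c + d < n - 1 then n - 1 - (c + d) else 2 * (n - 1) - (c + d))"
  have xd: "\<tau> (n - 1 - d) = d" using tt[of d] td by simp
  have lt1: "d - 1 + c < 2 * (n - 1)" using c d by simp
  have "(\<sigma> ^^ c) d = (d - 1 + c) mod (n - 1) + 1" using sig_pow[OF n2, of d c] d by simp
  also have "\<dots> = S" unfolding mod_lt2[OF lt1] S_def using c d cd by auto
  finally have L: "(\<sigma> ^^ c) d = S" .
  have rc: "\<rho> (n - 1 - c) = c" using rho_mid[of "n - 1 - c" n] c by simp
  have bb: "\<tau> (\<rho> (\<tau> c)) = n - 1 - c" using tc rc by simp
  have lt2: "n - 1 - d - 1 + (n - 1 - c) < 2 * (n - 1)" using c d by simp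
  have "(\<sigma> ^^ (n - 1 - c)) (n - 1 - d) = (n - 1 - d - 1 + (n - 1 - c)) mod (n - 1) + 1"
    using sig_pow[OF n2, of "n - 1 - d" "n - 1 - c"] d by simp
  also have "\<dots> = S'" unfolding mod_lt2[OF lt2] S'_def using c d cd by auto
  finally have M: "(\<sigma> ^^ (n - 1 - c)) (n - 1 - d) = S'" .
  have S'r: "1 \<le> S'" "S' \<le> n - 2" unfolding S'_def using c d cd by auto
  have tS': "1 \<le> \<tau> S'" "\<tau> S' \<le> n - 2" using t_mid[OF S'r] by auto
  have N: "(\<sigma> ^^ (n - 1 - c)) (\<tau> S') = (\<tau> S' - 1 + (n - 1 - c)) mod (n - 1) + 1"
    using sig_pow[OF n2, of "\<tau> S'" "n - 1 - c"] tS' by simp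
  have "\<tau> ((\<sigma> ^^ c) (\<tau> (n - 1 - d))) = (\<sigma> ^^ (\<tau> c)) (\<tau> ((\<sigma> ^^ (\<tau> (\<rho> (\<tau> c)))) (n - 1 - d)))"
    using rel[OF c] .
  then have "\<tau> S = (\<tau> S' - 1 + (n - 1 - c)) mod (n - 1) + 1"
    unfolding xd L bb M unfolding tc N .
  then show ?thesis unfolding S_def S'_def .
qed

lemma F4:
  assumes c: "1 \<le> c" "c \<le> n - 2" and d: "1 \<le> d" "d \<le> n - 2"
    and tc: "\<tau> c = \<rho> c" and td: "\<tau> d = \<rho> d"
  shows "d = c \<or> d = \<rho> c"
proof (cases "c + d = n - 1")
  case True
  then have "d = n - 1 - c" by linarith
  then show ?thesis using rho_mid[OF c] by simp
next
  case False
  have tc': "\<tau> c = n - 1 - c" using tc rho_mid[OF c] by simp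
  have td': "\<tau> d = n - 1 - d" using td rho_mid[OF d] by simp
  define S' where "S' = (if c + d < n - 1 then n - 1 - (c + d) else 2 * (n - 1) - (c + d))"
  have S'r: "1 \<le> S'" "S' \<le> n - 2" unfolding S'_def using c d False by auto
  have tS': "1 \<le> \<tau> S'" "\<tau> S' \<le> n - 2" using t_mid[OF S'r] by auto
  have F: "d + c \<noteq> n - 1" using False by simp
  define Sx where "Sx = (if c + d < n - 1 then c + d else c + d - (n - 1))"
  note K1 = K[OF c d tc' td' False, folded S'_def Sx_def]
  have e1: "(if d + c < n - 1 then d + c else d + c - (n - 1)) = Sx"
    unfolding Sx_def by (simp only: add.commute)
  have e2: "(if d + c < n - 1 then n - 1 - (d + c) else 2 * (n - 1) - (d + c)) = S'"
    unfolding S'_def by (simp only: add.commute)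
  note K2 = K[OF d c td' tc' F, unfolded e1 e2]
  have "(\<tau> S' - 1 + (n - 1 - c)) mod (n - 1) + 1 = (\<tau> S' - 1 + (n - 1 - d)) mod (n - 1) + 1"
    using trans[OF K1[symmetric] K2] .
  then have "(\<tau> S' - 1 + (n - 1 - c)) mod (n - 1) = (\<tau> S' - 1 + (n - 1 - d)) mod (n - 1)"
    by simp
  then have "c = d" by (rule mod_cancel_aux) (use c d tS' in auto)
  then show ?thesis by simp
qed

theorem main:
  "let Orbs = perm_orbits {\<rho>, \<tau>} {1..n} in
           card {A \<in> Orbs. card A = 2} \<in> {1, 2}
         \<and> (\<forall>A \<in> Orbs. card A = 6 \<or> card A = 2 \<or> (odd n \<and> card A \<in> {1, 3}))
         \<and> (odd n \<longrightarrow> card {A \<in> Orbs. card A \<in> {1, 3}} = 1)"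
proof -
  note props = orb6_props[of \<rho> \<tau>, OF rr tt U]
  note basic = orb6_basic[of \<rho> \<tau>, OF rr tt U]
  define Ob where "Ob = orb6 \<rho> \<tau>"
  have Orbs: "perm_orbits {\<rho>, \<tau>} {1..n} = Ob ` {1..n}"
    unfolding perm_orbits_def Ob_def using basic(3) by simp
  have Osub: "Ob x \<subseteq> {1..n}" if "x \<in> {1..n}" for x
    unfolding Ob_def orb6_def using that t_in rho_in by auto
  have On: "Ob (n - 1) = {n - 1, n}"
    unfolding Ob_def orb6_def by (auto simp: tnm1' rho_nm1' rho_n' tn')
  have nm1: "n - 1 \<in> {1..n}" using n2 by auto
  have c2n: "card {n - 1, n} = 2" using n2 by simp
  define C2 where "C2 = {A \<in> Ob ` {1..n}. card A = 2}"
  have inC2: "{n - 1, n} \<in> C2" unfolding C2_def using On nm1 c2n by (metis (mono_tags, lifting) image_eqI mem_Collect_eq)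
  have C2form: "A = {n - 1, n} \<or> (\<exists>c. 1 \<le> c \<and> c \<le> n - 2 \<and> \<tau> c = \<rho> c \<and> A = {c, \<rho> c})"
    if hA: "A \<in> C2" for A
  proof -
    obtain x where x: "x \<in> {1..n}" "A = Ob x" "card (Ob x) = 2" using hA unfolding C2_def by blast
    then have h: "\<tau> x = \<rho> x" "Ob x = {x, \<rho> x}" using props(2) unfolding Ob_def by auto
    consider "x = n - 1" | "x = n" | "1 \<le> x \<and> x \<le> n - 2" using x n2 by fastforce
    then show ?thesis
    proof cases
      case 1 then show ?thesis using x On by simp
    next
      case 2 then show ?thesis using x h rho_n by auto
    next
      case 3 then show ?thesis using x h by blast
    qed
  qed
  have finC2: "finite C2" unfolding C2_def by simp
  have cardC2: "card C2 \<in> {1, 2}"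
  proof (cases "\<exists>c. 1 \<le> c \<and> c \<le> n - 2 \<and> \<tau> c = \<rho> c")
    case True
    then obtain c where c: "1 \<le> c" "c \<le> n - 2" "\<tau> c = \<rho> c" by blast
    have "C2 \<subseteq> {{n - 1, n}, {c, \<rho> c}}"
    proof
      fix A assume "A \<in> C2"
      then show "A \<in> {{n - 1, n}, {c, \<rho> c}}"
      proof (cases "A = {n - 1, n}")
        case False
        then obtain d where d: "1 \<le> d" "d \<le> n - 2" "\<tau> d = \<rho> d" "A = {d, \<rho> d}"
          using C2form \<open>A \<in> C2\<close> by blast
        have "d = c \<or> d = \<rho> c" using F4[OF c(1,2) d(1,2) c(3) d(3)] .
        then have "A = {c, \<rho> c}" using d(4) rr by auto
        then show ?thesis by simp
      qed simp
    qed
    then have "card C2 \<le> card {{n - 1, n}, {c, \<rho> c}}" by (simp add: card_mono)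
    also have "\<dots> \<le> 2" by (simp add: card_insert_if)
    finally have "card C2 \<le> 2" .
    moreover have "card C2 \<noteq> 0" using finC2 inC2 by auto
    ultimately show ?thesis by auto
  next
    case False
    have "C2 \<subseteq> {{n - 1, n}}" using C2form False by blast
    then have "C2 = {{n - 1, n}}" using inC2 by blast
    then show ?thesis by simp
  qed
  have part2: "card A = 6 \<or> card A = 2 \<or> (odd n \<and> card A \<in> {1, 3})" if hA: "A \<in> Ob ` {1..n}" for A
  proof -
    obtain x where x: "x \<in> {1..n}" "A = Ob x" using hA by blast
    have "card A \<in> {1,2,3,6}" using props(1) x unfolding Ob_def by simp
    moreover have "odd n" if h: "card A \<in> {1,3}"
    proof -
      obtain y where "y \<in> Ob x" "\<rho> y = y" using props(3)[of x] h x(2) unfolding Ob_def by auto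
      then show ?thesis using F3 Osub[OF x(1)] by blast
    qed
    ultimately show ?thesis by auto
  qed
  have part3: "card {A \<in> Ob ` {1..n}. card A \<in> {1, 3}} = 1" if odd: "odd n"
  proof -
    define p where "p = (n - 1) div 2"
    have p: "p \<in> {1..n}" "\<rho> p = p" using F3c[OF odd] unfolding p_def by auto
    have "{A \<in> Ob ` {1..n}. card A \<in> {1, 3}} = {Ob p}"
    proof
      show "{Ob p} \<subseteq> {A \<in> Ob ` {1..n}. card A \<in> {1, 3}}"
        using p props(4)[of p] unfolding Ob_def by auto
    next
      show "{A \<in> Ob ` {1..n}. card A \<in> {1, 3}} \<subseteq> {Ob p}"
      proof
        fix A assume "A \<in> {A \<in> Ob ` {1..n}. card A \<in> {1, 3}}"
        then obtain x where x: "x \<in> {1..n}" "A = Ob x" "card (Ob x) \<in> {1,3}" by auto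
        obtain y where y: "y \<in> Ob x" "\<rho> y = y" using props(3) x unfolding Ob_def by auto
        have "y = p" using F3[OF _ y(2)] y(1) Osub[OF x(1)] unfolding p_def by blast
        then have "Ob p = Ob x" using y basic(2) unfolding Ob_def by auto
        then show "A \<in> {Ob p}" using x by simp
      qed
    qed
    then show ?thesis by simp
  qed
  show ?thesis unfolding Let_def Orbs using cardC2 part2 part3 unfolding C2_def by blast
qed

end


theorem proposition9:
  fixes n :: nat and \<tau> :: "nat \<Rightarrow> nat"
  assumes "n \<ge> 2"
    and "\<tau> permutes {1..n}"
    and "\<tau> \<circ> \<tau> = id" and "\<tau> \<noteq> id"
    and "\<tau> n = n - 1"
    and "\<forall>k \<in> {1..n-2}. \<tau> \<circ> (sigma_perm n ^^ k) \<circ> \<tau>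
            = (sigma_perm n ^^ (\<tau> k)) \<circ> \<tau> \<circ> (sigma_perm n ^^ ((\<tau> \<circ> rho_perm n \<circ> \<tau>) k))"
  shows "let Orbs = perm_orbits {rho_perm n, \<tau>} {1..n} in
           card {A \<in> Orbs. card A = 2} \<in> {1, 2}
         \<and> (\<forall>A \<in> Orbs. card A = 6 \<or> card A = 2 \<or> (odd n \<and> card A \<in> {1, 3}))
         \<and> (odd n \<longrightarrow> card {A \<in> Orbs. card A \<in> {1, 3}} = 1)"
proof -
  interpret P9 n \<tau> unfolding P9_def using assms by blast
  show ?thesis using main .
qed

end
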